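(* Let $n\ge3$ and let $l$ be the largest SIA index among all $n\times n$ SIA matrices. Among the sets $\mathcal S_1,\mathcal S_2,\ldots,\mathcal S_l$, the set $\mathcal S_1$ is the only one that is closed under matrix multiplication (i.e., $P,Q\in\mathcal S_k\Rightarrow PQ\in\mathcal S_k$ holds for $k=1$ and fails for every $2\le k\le l$).
   Context: Let $\mathcal N=\{1,\ldots,n\}$. A matrix is stochastic if it is entrywise nonnegative with row sums $1$. For stochastic $P$ and $\mathcal A\subseteq\mathcal N$, $F_P(\mathcal A)=\{j:\ p_{ij}>0\text{ for some } i\in\mathcal A\}$, $F_P^1=F_P$, $F_P^k(\mathcal A)=F_P(F_P^{k-1}(\mathcal A))$. $P$ is SIA if $\lim_{m\to\infty}P^m=\mathbf 1c^T$ for some nonnegative $c$ with entries summing to $1$. For an SIA matrix $P$ and each unordered pair of disjoint nonempty sets $\mathcal A,\tilde{\mathcal A}\subseteq\mathcal N$, let $s(\mathcal A,\tilde{\mathcal A})$ be the smallest integer $k\ge1$ such that either (i) $F_P^k(\mathcal A)\cap F_P^k(\tilde{\mathcal A})\ne\emptyset$, or (ii) $F_P^k(\mathcal A)\cap F_P^k(\tilde{\mathcal A})=\emptyset$ and $|F_P^k(\mathcal A)\cup F_P^k(\tilde{\mathcal A})|>|\mathcal A\cup\tilde{\mathcal A}|$. The SIA index of $P$ is the maximum of $s(\mathcal A,\tilde{\mathcal A})$ over all such pairs (it is at most $n(n-1)/2$). $\mathcal V_k$ is the set of $n\times n$ SIA matrices with SIA index exactly $k$, and $\mathcal S_k=\bigcup_{r=1}^k\mathcal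 V_r$. The set $\mathcal S_1$ coincides with the class of stochastic Sarymsakov matrices: stochastic $P$ such that for any disjoint nonempty $\mathcal A,\tilde{\mathcal A}\subseteq\mathcal N$, either $F_P(\mathcal A)\cap F_P(\tilde{\mathcal A})\neq\emptyset$, or $F_P(\mathcal A)\cap F_P(\tilde{\mathcal A})=\emptyset$ and $|F_P(\mathcal A)\cup F_P(\tilde{\mathcal A})|>|\mathcal A\cup\tilde{\mathcal A}|$. *)

theory Defs
  imports "HOL-Analysis.Analysis"
begin

text \<open>n x n real matrices are rendered as real^'n^'n, with N = UNIV :: 'n set, n = CARD('n).\<close>

definition stochastic :: "real^'n^'n \<Rightarrow> bool" where
  "stochastic P \<longleftrightarrow> (\<forall>i j. 0 \<le> P $ i $ j) \<and> (\<forall>i. (\<Sum>j\<in>UNIV. P $ i $ j) = 1)"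

definition mpow :: "real^'n^'n \<Rightarrow> nat \<Rightarrow> real^'n^'n" where
  "mpow P m = (((**) P) ^^ m) (mat 1)"

definition SIA :: "real^'n^'n \<Rightarrow> bool" where
  "SIA P \<longleftrightarrow> stochastic P \<and>
     (\<exists>c::real^'n. (\<forall>j. 0 \<le> c $ j) \<and> (\<Sum>j\<in>UNIV. c $ j) = 1 \<and>
        (\<lambda>m. mpow P m) \<longlonglongrightarrow> (\<chi> i. c))"

definition Fset :: "real^'n^'n \<Rightarrow> 'n set \<Rightarrow> 'n set" where
  "Fset P A = {j. \<exists>i\<in>A. P $ i $ j > 0}"

definition Fpow :: "real^'n^'n \<Rightarrow> nat \<Rightarrow> 'n set \<Rightarrow> 'n set" where
  "Fpow P k A = (Fset P ^^ k) A"

definition s_step :: "real^'n^'n \<Rightarrow> 'n set \<Rightarrow> 'n set \<Rightarrow> nat" where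
  "s_step P A B = (LEAST k. 1 \<le> k \<and>
      (Fpow P k A \<inter> Fpow P k B \<noteq> {} \<or>
       (Fpow P k A \<inter> Fpow P k B = {} \<and> card (Fpow P k A \<union> Fpow P k B) > card (A \<union> B))))"

definition SIA_index :: "real^'n^'n \<Rightarrow> nat" where
  "SIA_index P = Max {s_step P A B | A B. A \<noteq> {} \<and> B \<noteq> {} \<and> A \<inter> B = {}}"

definition V_set :: "nat \<Rightarrow> (real^'n^'n) set" where
  "V_set k = {P. SIA P \<and> SIA_index P = k}"

definition S_set :: "nat \<Rightarrow> (real^'n^'n) set" where
  "S_set k = (\<Union>r\<in>{1..k}. V_set r)"

definition mult_closed :: "(real^'n^'n) set \<Rightarrow> bool" where
  "mult_closed X \<longleftrightarrow> (\<forall>P\<in>X. \<forall>Q\<in>X. P ** Q \<in> X)"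

end

theory Submission imports Defs begin

lemma mpow_0[simp]: "mpow P 0 = mat 1" by (simp add: mpow_def)
lemma mpow_Suc: "mpow P (Suc m) = P ** mpow P m" by (simp add: mpow_def)

lemma funpow_mult: "(((**) P) ^^ m) X = mpow P m ** X"
  by (induction m) (simp_all add: mpow_def matrix_mul_assoc)

lemma mpow_add: "mpow P (m + k) = mpow P m ** mpow P k"
  unfolding mpow_def funpow_add comp_def by (rule funpow_mult[unfolded mpow_def])

lemma stoch_nonneg: "stochastic P \<Longrightarrow> 0 \<le> P$i$j" by (simp add: stochastic_def)
lemma stoch_sum: "stochastic P \<Longrightarrow> (\<Sum>j\<in>UNIV. P$i$j) = 1" by (simp add: stochastic_def)
lemma stoch_le1: assumes s: "stochastic P" shows "P$i$j \<le> 1"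
proof -
  have "P$i$j \<le> (\<Sum>k\<in>UNIV. P$i$k)" by (rule member_le_sum) (auto simp: stoch_nonneg[OF s])
  thus ?thesis using stoch_sum[OF s] by simp
qed
lemma stoch_mat1: "stochastic (mat 1 :: real^'n^'n)"
  by (simp add: stochastic_def mat_def)

lemma stoch_mult: assumes "stochastic P" "stochastic Q" shows "stochastic (P ** Q)"
proof -
  have "(\<Sum>j\<in>UNIV. \<Sum>k\<in>UNIV. P$i$k * Q$k$j) = 1" for i
  proof -
    have "(\<Sum>j\<in>UNIV. \<Sum>k\<in>UNIV. P$i$k * Q$k$j) = (\<Sum>k\<in>UNIV. P$i$k * (\<Sum>j\<in>UNIV. Q$k$j))"
      by (subst sum.swap) (simp add: sum_distrib_left)
    also have "\<dots> = 1" using assms by (simp add: stoch_sum)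
    finally show ?thesis .
  qed
  hence "\<forall>i. (\<Sum>j\<in>UNIV. (P**Q)$i$j) = 1" by (simp add: matrix_matrix_mult_def)
  moreover have "\<forall>i j. 0 \<le> (P**Q)$i$j" unfolding matrix_matrix_mult_def
    using stoch_nonneg[OF assms(1)] stoch_nonneg[OF assms(2)] by (simp add: sum_nonneg)
  ultimately show ?thesis by (simp add: stochastic_def)
qed

lemma stoch_mpow: "stochastic P \<Longrightarrow> stochastic (mpow P m)"
  by (induction m) (simp_all add: stoch_mat1 mpow_Suc stoch_mult)

lemma sum_pos_ex: assumes "\<And>x. 0 \<le> f x"
  shows "(0 < (\<Sum>x\<in>(UNIV::'a::finite set). (f x::real))) = (\<exists>x. 0 < f x)"
proof -
  have "0 \<le> (\<Sum>x\<in>(UNIV::'a set). f x)" using assms by (simp add: sum_nonneg)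
  moreover have "((\<Sum>x\<in>(UNIV::'a set). f x) = 0) = (\<forall>x. f x = 0)"
    using assms by (subst sum_nonneg_eq_0_iff) auto
  ultimately have "(0 < (\<Sum>x\<in>(UNIV::'a set). f x)) = (\<exists>x. f x \<noteq> 0)" by auto
  also have "\<dots> = (\<exists>x. 0 < f x)" using assms by (auto simp: order_less_le)
  finally show ?thesis .
qed

lemma Fset_mult: assumes "\<And>i j. 0 \<le> P$i$j" "\<And>i j. 0 \<le> Q$i$j"
  shows "Fset (P ** Q) A = Fset Q (Fset P A)"
proof -
  have "(0 < (P**Q)$i$j) = (\<exists>k. 0 < P$i$k \<and> 0 < Q$k$j)" for i j
  proof -
    have "(0 < (P**Q)$i$j) = (\<exists>k. 0 < P$i$k * Q$k$j)"
      unfolding matrix_matrix_mult_def using assms by (simp add: sum_pos_ex)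
    also have "\<dots> = (\<exists>k. 0 < P$i$k \<and> 0 < Q$k$j)"
      using assms by (auto simp: zero_less_mult_iff) (meson leD)+
    finally show ?thesis .
  qed
  thus ?thesis unfolding Fset_def by blast
qed

lemma Fset_mat1: "Fset (mat 1) A = A"
  by (auto simp: Fset_def mat_def)

lemma Fpow_Suc: "Fpow P (Suc k) A = Fset P (Fpow P k A)" by (simp add: Defs.Fpow_def)
lemma Fpow_1: "Fpow P 1 A = Fset P A" by (simp add: Defs.Fpow_def)

lemma Fpow_mpow: assumes "stochastic P" shows "Fpow P k A = Fset (mpow P k) A"
proof (induction k arbitrary: A)
  case 0 show ?case unfolding Defs.Fpow_def by (simp add: Fset_mat1)
next
  case (Suc k)
  have "Fpow P (Suc k) A = Fpow P k (Fset P A)" by (simp only: Defs.Fpow_def funpow_Suc_right comp_def)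
  also have "\<dots> = Fset (mpow P k) (Fset P A)" by (rule Suc)
  also have "\<dots> = Fset (mpow P (Suc k)) A" unfolding mpow_Suc
    by (rule Fset_mult[symmetric]) (auto intro: stoch_nonneg stoch_mpow assms)
  finally show ?case .
qed

lemma Fset_nonempty: assumes "stochastic P" "A \<noteq> {}" shows "Fset P A \<noteq> {}"
proof -
  obtain i where i: "i \<in> A" using assms by auto
  have "0 < (\<Sum>j\<in>UNIV. P$i$j)" using stoch_sum[OF assms(1)] by simp
  then have "\<exists>j. 0 < P$i$j" using sum_pos_ex[of "\<lambda>j. P$i$j"] stoch_nonneg[OF assms(1)] by blast
  then obtain j where "0 < P$i$j" by blast
  thus ?thesis using i unfolding Fset_def by blast
qed

lemma Fset_mono: "A \<subseteq> B \<Longrightarrow> Fset P A \<subseteq> Fset P B" unfolding Fset_def by auto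

lemma Fpow_nonempty: "stochastic P \<Longrightarrow> A \<noteq> {} \<Longrightarrow> Fpow P k A \<noteq> {}"
  by (induction k) (simp_all add: Fpow_Suc Defs.Fpow_def Fset_nonempty)


definition scond :: "real^'n^'n \<Rightarrow> nat \<Rightarrow> 'n set \<Rightarrow> 'n set \<Rightarrow> bool" where
  "scond P k A B \<longleftrightarrow> 1 \<le> k \<and>
      (Fpow P k A \<inter> Fpow P k B \<noteq> {} \<or>
       (Fpow P k A \<inter> Fpow P k B = {} \<and> card (Fpow P k A \<union> Fpow P k B) > card (A \<union> B)))"

lemma s_step_scond: "s_step P A B = (LEAST k. scond P k A B)"
  unfolding s_step_def scond_def ..

definition sary :: "real^'n^'n \<Rightarrow> bool" where
  "sary P \<longleftrightarrow> (\<forall>A B. A \<noteq> {} \<longrightarrow> B \<noteq> {} \<longrightarrow> A \<inter> B = {} \<longrightarrow> scond P 1 A B)"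

lemma SIA_eventually_pos:
  fixes P :: "real^'n^'n"
  assumes "SIA P" shows "\<exists>m\<ge>1. \<exists>j. \<forall>i. 0 < mpow P m $ i $ j"
proof -
  obtain c :: "real^'n" where c: "\<forall>j. 0 \<le> c $ j" "(\<Sum>j\<in>UNIV. c $ j) = 1"
    and lim: "(\<lambda>m. mpow P m) \<longlonglongrightarrow> (\<chi> i. c)"
    using assms unfolding SIA_def by blast
  have "\<exists>j. 0 < c $ j" using c sum_pos_ex[of "\<lambda>j. c$j"] by simp
  then obtain j where j: "0 < c $ j" by blast
  have "\<forall>\<^sub>F m in sequentially. 0 < mpow P m $ i $ j" for i
  proof -
    have "(\<lambda>m. mpow P m $ i $ j) \<longlonglongrightarrow> (\<chi> i. c) $ i $ j"
      by (intro tendsto_vec_nth lim)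
    hence "(\<lambda>m. mpow P m $ i $ j) \<longlonglongrightarrow> c $ j" by simp
    thus ?thesis using j by (rule order_tendstoD)
  qed
  hence "\<forall>\<^sub>F m in sequentially. \<forall>i. 0 < mpow P m $ i $ j" by (rule eventually_all_finite)
  then obtain N where N: "\<And>m. m \<ge> N \<Longrightarrow> \<forall>i. 0 < mpow P m $ i $ j"
    unfolding eventually_sequentially by blast
  have "\<forall>i. 0 < mpow P (Suc N) $ i $ j" using N by simp
  hence "Suc N \<ge> 1 \<and> (\<exists>j. \<forall>i. 0 < mpow P (Suc N) $ i $ j)" by auto
  thus ?thesis by blast
qed

lemma SIA_stoch: "SIA P \<Longrightarrow> stochastic P" by (simp add: SIA_def)

lemma scond_ex: assumes "SIA P" "A \<noteq> {}" "B \<noteq> {}" shows "\<exists>k. scond P k A B"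
proof -
  obtain m j where m: "m \<ge> 1" "\<forall>i. 0 < mpow P m $ i $ j" using SIA_eventually_pos[OF assms(1)] by blast
  have "j \<in> Fpow P m A" "j \<in> Fpow P m B"
    using m assms unfolding Fpow_mpow[OF SIA_stoch[OF assms(1)]] Fset_def by auto
  thus ?thesis using m unfolding scond_def by blast
qed

lemma s_step_good: assumes "SIA P" "A \<noteq> {}" "B \<noteq> {}" shows "scond P (s_step P A B) A B"
  unfolding s_step_scond using scond_ex[OF assms] by (rule LeastI_ex)

definition Sset :: "real^'n^'n \<Rightarrow> nat set" where
  "Sset P = {s_step P A B | A B. A \<noteq> {} \<and> B \<noteq> {} \<and> A \<inter> B = {}}"

lemma SIA_index_Sset: "SIA_index P = Max (Sset P)" unfolding SIA_index_def Sset_def ..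

lemma finite_Sset: "finite (Sset P)"
proof -
  have "Sset P \<subseteq> (\<lambda>(A,B). s_step P A B) ` UNIV" unfolding Sset_def by auto
  thus ?thesis by (rule finite_subset) simp
qed

lemma two_elems: fixes a0 :: "'n::finite" assumes "2 \<le> CARD('n)" obtains a b :: "'n" where "a \<noteq> b"
proof -
  obtain T :: "'n set" where "card T = 2" using obtain_subset_with_card_n[OF assms] by metis
  thus ?thesis using that by (auto simp: card_2_iff)
qed

lemma Sset_nonempty: assumes "2 \<le> CARD('n::finite)" shows "Sset (P::real^'n^'n) \<noteq> {}"
proof -
  obtain a b :: 'n where "a \<noteq> b" using two_elems[OF assms] by blast
  hence "s_step P {a} {b} \<in> Sset P" unfolding Sset_def by blast
  thus ?thesis by blast
qed

lemma index1_sary: assumes "SIA P" "SIA_index P = 1" shows "sary P"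
  unfolding sary_def
proof (intro allI impI)
  fix A B :: "'a set" assume AB: "A \<noteq> {}" "B \<noteq> {}" "A \<inter> B = {}"
  have "s_step P A B \<in> Sset P" using AB unfolding Sset_def by blast
  hence "s_step P A B \<le> 1" using assms(2) finite_Sset unfolding SIA_index_Sset by (metis Max_ge)
  moreover have g: "scond P (s_step P A B) A B" by (rule s_step_good) (use assms AB in auto)
  ultimately have "s_step P A B = 1" unfolding scond_def by simp
  thus "scond P 1 A B" using g by simp
qed

lemma sary_index1: assumes "2 \<le> CARD('n::finite)" "sary (P::real^'n^'n)" shows "SIA_index P = 1"
proof -
  have "Sset P \<subseteq> {1}"
  proof
    fix x assume "x \<in> Sset P"
    then obtain A B where AB: "A \<noteq> {}" "B \<noteq> {}" "A \<inter> B = {}" "x = s_step P A B"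
      unfolding Sset_def by blast
    have "s_step P A B = 1" unfolding s_step_scond
      by (rule Least_equality) (use assms(2) AB in \<open>auto simp: sary_def scond_def\<close>)
    thus "x \<in> {1}" using AB by simp
  qed
  hence "Sset P = {1}" using Sset_nonempty[OF assms(1)] by blast
  thus ?thesis unfolding SIA_index_Sset by simp
qed

lemma sary_mult: assumes "stochastic P" "stochastic Q" "sary P" "sary Q" shows "sary (P ** Q)"
  unfolding sary_def
proof (intro allI impI)
  fix A B :: "'a set" assume AB: "A \<noteq> {}" "B \<noteq> {}" "A \<inter> B = {}"
  have F: "Fset (P**Q) X = Fset Q (Fset P X)" for X
    by (rule Fset_mult) (use assms in \<open>auto intro: stoch_nonneg\<close>)
  have P1: "scond P 1 A B" using assms(3) AB unfolding sary_def by blast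
  show "scond (P**Q) 1 A B"
  proof (cases "Fset P A \<inter> Fset P B = {}")
    case False
    hence "Fset Q (Fset P A) \<inter> Fset Q (Fset P B) \<noteq> {}"
    proof -
      from False obtain j where j: "j \<in> Fset P A" "j \<in> Fset P B" by blast
      obtain l where "l \<in> Fset Q {j}" using Fset_nonempty[OF assms(2), of "{j}"] by blast
      moreover have "Fset Q {j} \<subseteq> Fset Q (Fset P A)" "Fset Q {j} \<subseteq> Fset Q (Fset P B)"
        using j by (auto intro!: Fset_mono)
      ultimately show ?thesis by blast
    qed
    thus ?thesis unfolding scond_def Fpow_1 F by simp
  next
    case True
    hence c1: "card (Fset P A \<union> Fset P B) > card (A \<union> B)" using P1 unfolding scond_def Fpow_1 by simp
    have ne: "Fset P A \<noteq> {}" "Fset P B \<noteq> {}" using Fset_nonempty[OF assms(1)] AB by auto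
    have "scond Q 1 (Fset P A) (Fset P B)" using assms(4) True ne
      unfolding sary_def by simp
    hence "Fset Q (Fset P A) \<inter> Fset Q (Fset P B) \<noteq> {} \<or>
       (Fset Q (Fset P A) \<inter> Fset Q (Fset P B) = {} \<and>
        card (Fset Q (Fset P A) \<union> Fset Q (Fset P B)) > card (Fset P A \<union> Fset P B))"
      unfolding scond_def Fpow_1 by blast
    thus ?thesis
    proof
      assume "Fset Q (Fset P A) \<inter> Fset Q (Fset P B) \<noteq> {}"
      thus ?thesis unfolding scond_def Fpow_1 F by simp
    next
      assume h: "Fset Q (Fset P A) \<inter> Fset Q (Fset P B) = {} \<and>
        card (Fset Q (Fset P A) \<union> Fset Q (Fset P B)) > card (Fset P A \<union> Fset P B)"
      hence "card (Fset Q (Fset P A) \<union> Fset Q (Fset P B)) > card (A \<union> B)" using c1 by linarith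
      thus ?thesis using h unfolding scond_def Fpow_1 F by simp
    qed
  qed
qed


definition colmax :: "real^'n^'n \<Rightarrow> 'n \<Rightarrow> real" where
  "colmax X j = Max (range (\<lambda>i. X$i$j))"
definition colmin :: "real^'n^'n \<Rightarrow> 'n \<Rightarrow> real" where
  "colmin X j = Min (range (\<lambda>i. X$i$j))"

lemma colmax_ge: "X$i$j \<le> colmax X j" unfolding colmax_def by (rule Max_ge) auto
lemma colmin_le: "colmin X j \<le> X$i$j" unfolding colmin_def by (rule Min_le) auto
lemma colmax_in: "\<exists>i. colmax X j = X$i$j"
proof -
  have "colmax X j \<in> range (\<lambda>i. X$i$j)" unfolding colmax_def by (rule Max_in) auto
  thus ?thesis by auto
qed
lemma colmin_in: "\<exists>i. colmin X j = X$i$j"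
proof -
  have "colmin X j \<in> range (\<lambda>i. X$i$j)" unfolding colmin_def by (rule Min_in) auto
  thus ?thesis by auto
qed

lemma row_avg_le: assumes "stochastic A" "\<And>k. x k \<le> h"
  shows "(\<Sum>k\<in>UNIV. A$i$k * x k) \<le> h"
proof -
  have "(\<Sum>k\<in>UNIV. A$i$k * x k) \<le> (\<Sum>k\<in>UNIV. A$i$k * h)"
    by (rule sum_mono) (intro mult_left_mono assms(2) stoch_nonneg[OF assms(1)])
  also have "\<dots> = h" using stoch_sum[OF assms(1)] by (simp add: sum_distrib_right[symmetric])
  finally show ?thesis .
qed

lemma row_avg_ge: assumes "stochastic A" "\<And>k. l \<le> x k"
  shows "l \<le> (\<Sum>k\<in>UNIV. A$i$k * x k)"
proof -
  have "l = (\<Sum>k\<in>UNIV. A$i$k * l)" using stoch_sum[OF assms(1)] by (simp add: sum_distrib_right[symmetric])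
  also have "\<dots> \<le> (\<Sum>k\<in>UNIV. A$i$k * x k)"
    by (rule sum_mono) (intro mult_left_mono assms(2) stoch_nonneg[OF assms(1)])
  finally show ?thesis .
qed

lemma row_split: fixes W :: "real^'n^'n"
  shows "(\<Sum>k\<in>UNIV. W$i$k * x k) = (\<Sum>k\<in>UNIV. (W$i$k - (if k = j then e else 0)) * x k) + e * x j"
proof -
  have "(\<Sum>k\<in>UNIV. W$i$k * x k) = (\<Sum>k\<in>UNIV. (W$i$k - (if k = j then e else 0)) * x k + (if k = j then e * x j else 0))"
    by (rule sum.cong) (auto simp: algebra_simps)
  also have "\<dots> = (\<Sum>k\<in>UNIV. (W$i$k - (if k = j then e else 0)) * x k) + e * x j"
    by (simp add: sum.distrib)
  finally show ?thesis .
qed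

lemma row_wsum: assumes "stochastic W"
  shows "(\<Sum>k\<in>UNIV. (W$i$k - (if k = j then e else 0))) = 1 - e"
  using stoch_sum[OF assms] by (simp add: sum_subtractf)

lemma row_contract_le: assumes "stochastic W" "e \<le> W$i$j" "\<And>k. x k \<le> h"
  shows "(\<Sum>k\<in>UNIV. W$i$k * x k) \<le> e * x j + (1 - e) * h"
proof -
  have nn: "0 \<le> W$i$k - (if k = j then e else 0)" for k
    using assms(2) stoch_nonneg[OF assms(1)] by auto
  have "(\<Sum>k\<in>UNIV. (W$i$k - (if k = j then e else 0)) * x k) \<le> (\<Sum>k\<in>UNIV. (W$i$k - (if k = j then e else 0)) * h)"
    by (rule sum_mono) (intro mult_left_mono assms(3) nn)
  also have "\<dots> = (1 - e) * h" using row_wsum[OF assms(1)] by (simp add: sum_distrib_right[symmetric])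
  finally show ?thesis unfolding row_split[of W i x j e] by simp
qed

lemma row_contract_ge: assumes "stochastic W" "e \<le> W$i$j" "\<And>k. l \<le> x k"
  shows "e * x j + (1 - e) * l \<le> (\<Sum>k\<in>UNIV. W$i$k * x k)"
proof -
  have nn: "0 \<le> W$i$k - (if k = j then e else 0)" for k
    using assms(2) stoch_nonneg[OF assms(1)] by auto
  have "(1 - e) * l = (\<Sum>k\<in>UNIV. (W$i$k - (if k = j then e else 0)) * l)"
    using row_wsum[OF assms(1)] by (simp add: sum_distrib_right[symmetric])
  also have "\<dots> \<le> (\<Sum>k\<in>UNIV. (W$i$k - (if k = j then e else 0)) * x k)"
    by (rule sum_mono) (intro mult_left_mono assms(3) nn)
  finally show ?thesis unfolding row_split[of W i x j e] by simp
qed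

lemma colmax_mult: assumes "stochastic A" shows "colmax (A ** X) j \<le> colmax X j"
proof -
  obtain i where "colmax (A ** X) j = (A**X)$i$j" using colmax_in by blast
  also have "\<dots> = (\<Sum>k\<in>UNIV. A$i$k * X$k$j)" by (simp add: matrix_matrix_mult_def)
  also have "\<dots> \<le> colmax X j" by (rule row_avg_le[OF assms]) (rule colmax_ge)
  finally show ?thesis .
qed

lemma colmin_mult: assumes "stochastic A" shows "colmin X j \<le> colmin (A ** X) j"
proof -
  obtain i where "colmin (A ** X) j = (A**X)$i$j" using colmin_in by blast
  moreover have "(A**X)$i$j = (\<Sum>k\<in>UNIV. A$i$k * X$k$j)" by (simp add: matrix_matrix_mult_def)
  moreover have "colmin X j \<le> (\<Sum>k\<in>UNIV. A$i$k * X$k$j)" by (rule row_avg_ge[OF assms]) (rule colmin_le)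
  ultimately show ?thesis by simp
qed

lemma contract: assumes "stochastic W" "\<forall>i i'. \<exists>j. e \<le> W$i$j \<and> e \<le> W$i'$j"
  shows "colmax (W ** X) j0 - colmin (W ** X) j0 \<le> (1 - e) * (colmax X j0 - colmin X j0)"
proof -
  obtain i1 where i1: "colmax (W ** X) j0 = (W**X)$i1$j0" using colmax_in by blast
  obtain i2 where i2: "colmin (W ** X) j0 = (W**X)$i2$j0" using colmin_in by blast
  obtain j where j: "e \<le> W$i1$j" "e \<le> W$i2$j" using assms(2) by blast
  have "(W**X)$i1$j0 \<le> e * X$j$j0 + (1 - e) * colmax X j0"
    unfolding matrix_matrix_mult_def vec_lambda_beta
    by (rule row_contract_le[OF assms(1) j(1)]) (rule colmax_ge)
  moreover have "e * X$j$j0 + (1 - e) * colmin X j0 \<le> (W**X)$i2$j0"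
    unfolding matrix_matrix_mult_def vec_lambda_beta
    by (rule row_contract_ge[OF assms(1) j(2)]) (rule colmin_le)
  ultimately show ?thesis unfolding i1 i2 by (simp add: algebra_simps)
qed

lemma colmax_le1: "stochastic X \<Longrightarrow> colmax X j \<le> 1"
  using colmax_in[of X j] stoch_le1 by metis
lemma colmin_ge0: "stochastic X \<Longrightarrow> 0 \<le> colmin X j"
  using colmin_in[of X j] stoch_nonneg by metis


lemma get_eps: fixes W :: "real^'n^'n"
  assumes "stochastic W" "\<forall>i i'. \<exists>j. 0 < W$i$j \<and> 0 < W$i'$j"
  obtains e where "0 < e" "e \<le> 1" "\<forall>i i'. \<exists>j. e \<le> W$i$j \<and> e \<le> W$i'$j"
proof -
  define E where "E = {W$i$j | i j. 0 < W$i$j}"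
  have fin: "finite E"
  proof -
    have "E \<subseteq> (\<lambda>(i,j). W$i$j) ` UNIV" unfolding E_def by auto
    thus ?thesis by (rule finite_subset) simp
  qed
  obtain i0 j0 where ij0: "0 < W$i0$j0" using assms(2) by blast
  hence ne: "E \<noteq> {}" unfolding E_def by blast
  have pos: "0 < Min E" using fin ne unfolding E_def by (auto simp: Min_gr_iff)
  have le1: "Min E \<le> 1"
  proof -
    have "Min E \<le> W$i0$j0" using fin ij0 unfolding E_def by (intro Min_le) auto
    also have "\<dots> \<le> 1" by (rule stoch_le1[OF assms(1)])
    finally show ?thesis .
  qed
  have "\<forall>i i'. \<exists>j. Min E \<le> W$i$j \<and> Min E \<le> W$i'$j"
  proof (intro allI)
    fix i i'
    obtain j where "0 < W$i$j" "0 < W$i'$j" using assms(2) by blast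
    hence "Min E \<le> W$i$j \<and> Min E \<le> W$i'$j" using fin unfolding E_def by (auto intro!: Min_le)
    thus "\<exists>j. Min E \<le> W$i$j \<and> Min E \<le> W$i'$j" by blast
  qed
  thus ?thesis using that pos le1 by blast
qed

lemma scramble_SIA:
  fixes M :: "real^'n^'n"
  assumes st: "stochastic M" and pairs: "\<forall>i i'. \<exists>j. 0 < mpow M N $ i $ j \<and> 0 < mpow M N $ i' $ j"
  shows "SIA M"
proof -
  define W where "W = mpow M N"
  have stW: "stochastic W" unfolding W_def by (rule stoch_mpow[OF st])
  obtain e where e: "0 < e" "e \<le> 1" "\<forall>i i'. \<exists>j. e \<le> W$i$j \<and> e \<le> W$i'$j"
    using get_eps[OF stW] pairs unfolding W_def by blast
  have stm: "stochastic (mpow M m)" for m by (rule stoch_mpow[OF st])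
  have conv: "\<exists>L. \<forall>i. (\<lambda>m. mpow M m $ i $ j) \<longlonglongrightarrow> L" for j
  proof -
    define osc where "osc m = colmax (mpow M m) j - colmin (mpow M m) j" for m
    define hi where "hi m = colmax (mpow M m) j" for m
    have osc_Suc: "osc (Suc m) \<le> osc m" for m
      unfolding osc_def mpow_Suc using colmax_mult[OF st] colmin_mult[OF st]
      by (smt (verit))
    have dec: "antimono_on UNIV osc" by (rule decseq_SucI) (rule osc_Suc)
    have osc_kN: "osc (k * N) \<le> (1 - e) ^ k" for k
    proof (induction k)
      case 0
      show ?case unfolding osc_def using colmax_le1[OF stm] colmin_ge0[OF stm] by (smt (verit) power_0 mult_0)
    next
      case (Suc k)
      have "mpow M (Suc k * N) = W ** mpow M (k * N)" unfolding W_def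
        by (metis mpow_add mult_Suc)
      hence "osc (Suc k * N) \<le> (1 - e) * osc (k * N)" unfolding osc_def
        using contract[OF stW e(3)] by simp
      also have "\<dots> \<le> (1 - e) * (1 - e) ^ k" using Suc e(2) by (intro mult_left_mono) auto
      finally show ?case by simp
    qed
    have osc_nn: "0 \<le> osc m" for m unfolding osc_def
      using colmax_ge[where X="mpow M m" and i=undefined and j=j] colmin_le[where X="mpow M m" and i=undefined and j=j] by simp
    have osc0: "osc \<longlonglongrightarrow> 0"
    proof (rule LIMSEQ_I)
      fix r :: real assume r: "0 < r"
      obtain k where k: "(1 - e) ^ k < r" using real_arch_pow_inv[OF r, of "1 - e"] e(1) by auto
      have "norm (osc m - 0) < r" if "m \<ge> k * N" for m
      proof -
        have "osc m \<le> osc (k * N)" using decseqD[OF dec that] .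
        thus ?thesis using osc_kN[of k] k osc_nn[of m] by simp
      qed
      thus "\<exists>no. \<forall>m\<ge>no. norm (osc m - 0) < r" by blast
    qed
    have hidec: "antimono_on UNIV hi" unfolding hi_def
      by (rule decseq_SucI) (simp add: mpow_Suc colmax_mult[OF st])
    have hinn: "\<forall>m. 0 \<le> hi m" unfolding hi_def using colmin_ge0[OF stm] colmax_ge colmin_le
      by (meson order_trans)
    obtain L where L: "hi \<longlonglongrightarrow> L" using decseq_convergent[OF hidec hinn] by blast
    have "(\<lambda>m. mpow M m $ i $ j) \<longlonglongrightarrow> L" for i
    proof -
      have "(\<lambda>m. hi m - mpow M m $ i $ j) \<longlonglongrightarrow> 0"
      proof (rule tendsto_sandwich[of "\<lambda>m. 0" _ _ osc])
        show "\<forall>\<^sub>F m in sequentially. 0 \<le> hi m - mpow M m $ i $ j"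
          unfolding hi_def by (simp add: colmax_ge)
        show "\<forall>\<^sub>F m in sequentially. hi m - mpow M m $ i $ j \<le> osc m"
          unfolding hi_def osc_def by (simp add: colmin_le)
      qed (auto simp: osc0)
      hence "(\<lambda>m. hi m - (hi m - mpow M m $ i $ j)) \<longlonglongrightarrow> L - 0" by (intro tendsto_diff L)
      thus ?thesis by simp
    qed
    thus ?thesis by blast
  qed
  then obtain L where L: "\<And>i j. (\<lambda>m. mpow M m $ i $ j) \<longlonglongrightarrow> L j" by metis
  define c :: "real^'n" where "c = (\<chi> j. L j)"
  have lim: "(\<lambda>m. mpow M m) \<longlonglongrightarrow> (\<chi> i. c)"
    by (intro vec_tendstoI) (simp add: c_def L)
  have cnn: "\<forall>j. 0 \<le> c $ j"
    unfolding c_def using L by (auto intro!: LIMSEQ_le_const stoch_nonneg[OF stm])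
  have "(\<lambda>m. \<Sum>j\<in>UNIV. mpow M m $ i $ j) \<longlonglongrightarrow> (\<Sum>j\<in>UNIV. L j)" for i
    by (intro tendsto_sum L)
  hence "(\<lambda>m. 1) \<longlonglongrightarrow> (\<Sum>j\<in>UNIV. L j)" using stoch_sum[OF stm] by simp
  hence "(\<Sum>j\<in>UNIV. L j) = 1" using LIMSEQ_unique tendsto_const by metis
  hence "(\<Sum>j\<in>UNIV. c $ j) = 1" by (simp add: c_def)
  thus ?thesis unfolding SIA_def using st cnn lim by blast
qed


lemma Fpow_0: "Fpow P 0 A = A" by (simp add: Defs.Fpow_def)

lemma sary_pairs: fixes M :: "real^'n^'n"
  assumes st: "stochastic M" and sy: "sary M"
  shows "Fpow M CARD('n) {i} \<inter> Fpow M CARD('n) {i'} \<noteq> {}"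
proof (cases "i = i'")
  case True thus ?thesis using Fpow_nonempty[OF st] by auto
next
  case False
  have claim: "Fpow M k {i} \<inter> Fpow M k {i'} \<noteq> {} \<or> k + 2 \<le> card (Fpow M k {i} \<union> Fpow M k {i'})" for k
  proof (induction k)
    case 0 thus ?case using False by (simp add: Fpow_0)
  next
    case (Suc k)
    let ?A = "Fpow M k {i}" and ?B = "Fpow M k {i'}"
    show ?case
    proof (cases "?A \<inter> ?B = {}")
      case False
      then obtain j where j: "j \<in> ?A" "j \<in> ?B" by blast
      obtain l where "l \<in> Fset M {j}" using Fset_nonempty[OF st, of "{j}"] by blast
      moreover have "Fset M {j} \<subseteq> Fset M ?A" "Fset M {j} \<subseteq> Fset M ?B"
        using j by (auto intro!: Fset_mono)
      ultimately show ?thesis unfolding Fpow_Suc by blast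
    next
      case True
      hence c: "k + 2 \<le> card (?A \<union> ?B)" using Suc by simp
      have "?A \<noteq> {}" "?B \<noteq> {}" using Fpow_nonempty[OF st] by auto
      hence "scond M 1 ?A ?B" using sy True unfolding sary_def by simp
      hence "Fset M ?A \<inter> Fset M ?B \<noteq> {} \<or> card (Fset M ?A \<union> Fset M ?B) > card (?A \<union> ?B)"
        unfolding scond_def Fpow_1 by blast
      thus ?thesis using c unfolding Fpow_Suc by auto
    qed
  qed
  have "card (Fpow M CARD('n) {i} \<union> Fpow M CARD('n) {i'}) \<le> CARD('n)"
    by (rule card_mono) auto
  thus ?thesis using claim[of "CARD('n)"] by linarith
qed

lemma sary_SIA: fixes M :: "real^'n^'n"
  assumes st: "stochastic M" and sy: "sary M" shows "SIA M"
proof (rule scramble_SIA[OF st, of "CARD('n)"], intro allI)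
  fix i i'
  obtain j where "j \<in> Fpow M CARD('n) {i}" "j \<in> Fpow M CARD('n) {i'}"
    using sary_pairs[OF st sy, of i i'] by blast
  thus "\<exists>j. 0 < mpow M CARD('n) $ i $ j \<and> 0 < mpow M CARD('n) $ i' $ j"
    unfolding Fpow_mpow[OF st] Fset_def by auto
qed

lemma S1_closed: assumes "2 \<le> CARD('n::finite)"
  shows "mult_closed (S_set 1 :: (real^'n^'n) set)"
  unfolding mult_closed_def
proof (intro ballI)
  fix P Q :: "real^'n^'n" assume PQ: "P \<in> S_set 1" "Q \<in> S_set 1"
  hence h: "SIA P" "SIA_index P = 1" "SIA Q" "SIA_index Q = 1"
    unfolding S_set_def V_set_def by auto
  have st: "stochastic P" "stochastic Q" using h SIA_stoch by auto
  have sy: "sary (P ** Q)" by (rule sary_mult[OF st index1_sary index1_sary]) (use h in auto)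
  have "SIA (P ** Q)" by (rule sary_SIA[OF stoch_mult[OF st] sy])
  moreover have "SIA_index (P ** Q) = 1" by (rule sary_index1[OF assms sy])
  ultimately show "P ** Q \<in> S_set 1" unfolding S_set_def V_set_def by auto
qed


definition fmat :: "('n \<Rightarrow> 'n) \<Rightarrow> real^'n^'n" where
  "fmat f = (\<chi> i j. if j = f i then 1 else 0)"

lemma fmat_nth: "fmat f $ i $ j = (if j = f i then 1 else 0)" by (simp add: fmat_def)

lemma fmat_mult: "fmat f ** fmat g = fmat (g \<circ> f)"
  by (simp add: vec_eq_iff matrix_matrix_mult_def fmat_nth if_distrib[of "\<lambda>x. x * _"] cong: if_cong)

lemma fmat_stoch: "stochastic (fmat f)"
  by (simp add: stochastic_def fmat_nth)

lemma Fset_fmat: "Fset (fmat f) A = f ` A"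
  by (auto simp: Fset_def fmat_nth)

lemma mpow_fmat: "mpow (fmat f) m = fmat (f ^^ m)"
proof (induction m)
  case 0 show ?case by (simp add: vec_eq_iff fmat_nth mat_def)
next
  case (Suc m) thus ?case by (simp only: mpow_Suc fmat_mult funpow_Suc_right)
qed

lemma funpow_const2: assumes "\<And>x. f (f x) = a" shows "f ^^ (Suc (Suc m)) = (\<lambda>_. a)"
proof (induction m)
  case 0 show ?case using assms by (simp add: fun_eq_iff)
next
  case (Suc m)
  have fa: "f a = a" using assms[of "f a"] assms[of a] by metis
  have "f ^^ Suc (Suc (Suc m)) = f \<circ> (f ^^ Suc (Suc m))" by simp
  also have "\<dots> = (\<lambda>_. a)" using Suc fa by (simp add: fun_eq_iff)
  finally show ?case .
qed

lemma funpow_fix: "f b = b \<Longrightarrow> (f ^^ m) b = b"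
  by (induction m) auto

lemma fmat_SIA: fixes f :: "'n::finite \<Rightarrow> 'n" assumes "\<And>x. f (f x) = a" shows "SIA (fmat f)"
proof -
  define c :: "real^'n" where "c = (\<chi> j. if j = a then 1 else 0)"
  have ev: "\<forall>\<^sub>F m in sequentially. mpow (fmat f) m = (\<chi> i. c)"
    unfolding eventually_sequentially
  proof (intro exI allI impI)
    fix m :: nat assume "2 \<le> m"
    then obtain k where k: "m = Suc (Suc k)" by (metis add_2_eq_Suc le_Suc_ex)
    have "f ^^ Suc (Suc k) = (\<lambda>_. a)" by (rule funpow_const2) (rule assms)
    thus "mpow (fmat f) m = (\<chi> i. c)"
      by (simp add: k mpow_fmat vec_eq_iff fmat_nth c_def)
  qed
  have "(\<lambda>m. mpow (fmat f) m) \<longlonglongrightarrow> (\<chi> i. c)"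
    by (rule tendsto_eventually[OF ev])
  moreover have "\<forall>j. 0 \<le> c $ j" "(\<Sum>j\<in>UNIV. c $ j) = 1" by (auto simp: c_def)
  ultimately show ?thesis unfolding SIA_def using fmat_stoch by blast
qed

lemma fmat_S: assumes "2 \<le> CARD('n::finite)" "\<And>x. f (f x) = a" "2 \<le> k"
  shows "fmat (f :: 'n \<Rightarrow> 'n) \<in> S_set k"
proof -
  have sia: "SIA (fmat f)" by (rule fmat_SIA) (rule assms(2))
  have "Sset (fmat f) \<subseteq> {1, 2}"
  proof
    fix x assume "x \<in> Sset (fmat f)"
    then obtain A B where AB: "A \<noteq> {}" "B \<noteq> {}" "A \<inter> B = {}" "x = s_step (fmat f) A B"
      unfolding Sset_def by blast
    have F2: "Fpow (fmat f) 2 X = {a}" if "X \<noteq> {}" for X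
      using that by (simp add: numeral_2_eq_2 Fpow_Suc Fpow_0 Fset_fmat image_image assms(2) image_constant_conv)
    have "scond (fmat f) 2 A B" using F2[OF AB(1)] F2[OF AB(2)] unfolding scond_def by simp
    hence "s_step (fmat f) A B \<le> 2" unfolding s_step_scond by (rule Least_le)
    moreover have "1 \<le> s_step (fmat f) A B" using s_step_good[OF sia AB(1,2)] unfolding scond_def by simp
    ultimately show "x \<in> {1, 2}" using AB by auto
  qed
  moreover have "Max (Sset (fmat f)) \<in> Sset (fmat f)"
    by (rule Max_in[OF finite_Sset Sset_nonempty[OF assms(1)]])
  ultimately have "SIA_index (fmat f) \<in> {1, 2}" unfolding SIA_index_Sset by blast
  hence "SIA_index (fmat f) \<in> {1..k}" using assms(3) by auto
  thus ?thesis using sia unfolding S_set_def V_set_def by blast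
qed

lemma fmat_not_SIA: fixes h :: "'n::finite \<Rightarrow> 'n" assumes "h b = b" "h c = c" "b \<noteq> c" shows "\<not> SIA (fmat h)"
proof
  assume "SIA (fmat h)"
  then obtain v :: "real^'n" where lim: "(\<lambda>m. mpow (fmat h) m) \<longlonglongrightarrow> (\<chi> i. v)"
    unfolding SIA_def by blast
  have "(\<lambda>m. mpow (fmat h) m $ b $ b) \<longlonglongrightarrow> (\<chi> i. v) $ b $ b" by (intro tendsto_vec_nth lim)
  moreover have "(\<lambda>m. mpow (fmat h) m $ b $ b) = (\<lambda>m. 1)"
    using funpow_fix[of h b, OF assms(1)] by (simp add: mpow_fmat fmat_nth fun_eq_iff)
  ultimately have "(\<lambda>m. 1::real) \<longlonglongrightarrow> v $ b" by simp
  hence 1: "v $ b = 1" using LIMSEQ_unique[OF tendsto_const] by metis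
  have "(\<lambda>m. mpow (fmat h) m $ c $ b) \<longlonglongrightarrow> (\<chi> i. v) $ c $ b" by (intro tendsto_vec_nth lim)
  moreover have "(\<lambda>m. mpow (fmat h) m $ c $ b) = (\<lambda>m. 0)"
    using funpow_fix[of h c, OF assms(2)] assms(3) by (simp add: mpow_fmat fmat_nth fun_eq_iff)
  ultimately have "(\<lambda>m. 0::real) \<longlonglongrightarrow> v $ b" by simp
  hence "v $ b = 0" using LIMSEQ_unique[OF tendsto_const] by metis
  thus False using 1 by simp
qed


lemma three_elems: fixes a0 :: "'n::finite" assumes "3 \<le> CARD('n)"
  obtains a b c :: "'n" where "a \<noteq> b" "b \<noteq> c" "a \<noteq> c"
proof -
  obtain T :: "'n set" where "card T = 3" using obtain_subset_with_card_n[OF assms] by metis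
  thus ?thesis using that by (auto simp: card_3_iff)
qed

theorem theorem4:
  fixes l :: nat
  assumes "CARD('n::finite) \<ge> 3"
    and "l = Max (SIA_index ` {P :: real^'n^'n. SIA P})"
  shows "mult_closed (S_set 1 :: (real^'n^'n) set) \<and>
         (\<forall>k. 2 \<le> k \<and> k \<le> l \<longrightarrow> \<not> mult_closed (S_set k :: (real^'n^'n) set))"
proof
  have two: "2 \<le> CARD('n)" using assms(1) by simp
  show "mult_closed (S_set 1 :: (real^'n^'n) set)" by (rule S1_closed[OF two])
  show "\<forall>k. 2 \<le> k \<and> k \<le> l \<longrightarrow> \<not> mult_closed (S_set k :: (real^'n^'n) set)"
  proof (intro allI impI)
    fix k assume k: "2 \<le> k \<and> k \<le> l"
    obtain a b c :: 'n where abc: "a \<noteq> b" "b \<noteq> c" "a \<noteq> c"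
      using three_elems[OF assms(1)] by blast
    define f where "f x = (if x = c then b else a)" for x
    define g where "g x = (if x = a then b else c)" for x
    have ff: "f (f x) = a" for x using abc by (simp add: f_def)
    have gg: "g (g x) = c" for x using abc by (simp add: g_def)
    have P: "fmat f \<in> (S_set k :: (real^'n^'n) set)" by (rule fmat_S[OF two, of f a]) (use k ff in auto)
    have Q: "fmat g \<in> (S_set k :: (real^'n^'n) set)" by (rule fmat_S[OF two, of g c]) (use k gg in auto)
    have "\<not> SIA (fmat (g \<circ> f) :: real^'n^'n)"
      by (rule fmat_not_SIA[of _ b c]) (use abc in \<open>simp_all add: f_def g_def\<close>)
    hence "fmat f ** fmat g \<notin> (S_set k :: (real^'n^'n) set)"
      unfolding fmat_mult S_set_def V_set_def by blast
    thus "\<not> mult_closed (S_set k :: (real^'n^'n) set)" using P Q unfolding mult_closed_def by blast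
  qed
qed

end
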